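(* Let $m\ge1$ and $m_0\in\{0,\dots,m\}$. Let $\mathbf p=(p_1,\dots,p_m)$ have joint distribution $P$ such that $p_1,\dots,p_{m_0}$ are mutually independent and each satisfies $P(p_i\le x)\le x$ for all $x\in[0,1]$ (the remaining $p$-values having arbitrary joint distribution, possibly dependent on the first ones). Let $\delta$ be a multiple testing procedure rejecting exactly the hypotheses $i$ with $p_i\le t^*(\mathbf p)$, where $t^*:[0,1]^m\to[0,1]$ is measurable and nonincreasing in each coordinate. Let $\phi:\mathbb N\to\mathbb R$ be nondecreasing, and set $R(P,\delta)=\mathbb E_{\mathbf p\sim P}[\phi(V_m(\delta(\mathbf p)))]$. Then $R(P,\delta)\le R(\mathrm{DU}(m,m_0),\delta)$.
   Context: $V_m(\delta(\mathbf p))=|\{1\le i\le m_0: p_i\le t^*(\mathbf p)\}|$ is the number of rejected true null hypotheses, hypotheses $1,\dots,m_0$ being the true nulls. $\mathrm{DU}(m,m_0)$ is the Dirac-uniform distribution: $p_1,\dots,p_{m_0}$ i.i.d. uniform on $(0,1)$ and $p_i=0$ almost surely for $m_0<i\le m$. (Example: $\phi(v)=\mathbf 1\{v\ge k\}$ gives the $k$-FWER.) *)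

theory Defs
  imports "HOL-Probability.Probability"
begin

text \<open>p-value vectors (p_1,...,p_m) are represented 0-indexed as extensional functions
  on {..<m}; hypotheses with index i < m0 are the true nulls.\<close>

definition pspace :: "nat \<Rightarrow> (nat \<Rightarrow> real) measure" where
  "pspace m = PiM {..<m} (\<lambda>_. borel)"

definition Vrej :: "nat \<Rightarrow> ((nat \<Rightarrow> real) \<Rightarrow> real) \<Rightarrow> (nat \<Rightarrow> real) \<Rightarrow> nat" where
  "Vrej m0 t p = card {i. i < m0 \<and> p i \<le> t p}"

definition DU :: "nat \<Rightarrow> nat \<Rightarrow> (nat \<Rightarrow> real) measure" where
  "DU m m0 = PiM {..<m} (\<lambda>i. if i < m0 then uniform_measure lborel {0<..<1}
                                 else return borel 0)"

definition risk :: "(nat \<Rightarrow> real) measure \<Rightarrow> nat \<Rightarrow> ((nat \<Rightarrow> real) \<Rightarrow> real)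
                     \<Rightarrow> (nat \<Rightarrow> real) \<Rightarrow> real" where
  "risk P m0 t \<phi> = (\<integral>p. \<phi> (Vrej m0 t p) \<partial>P)"

end

theory Submission
  imports Defs
begin


abbreviation U01 :: "real measure" where "U01 \<equiv> uniform_measure lborel {0<..<1::real}"

lemma U01_prob: "prob_space U01"
  by (rule prob_space_uniform_measure) auto

lemma U01_emeasure: "A \<in> sets borel \<Longrightarrow> emeasure U01 A = emeasure lborel (A \<inter> {0<..<1})"
  by (subst emeasure_uniform_measure) (auto simp: Int_commute divide_ennreal_def)

lemma U01_AE: "AE x in U01. x \<in> {0<..<1}"
  by (rule AE_uniform_measureI) auto

lemma downset_le:
  fixes \<mu> :: "real measure"
  assumes mu: "prob_space \<mu>" "sets \<mu> = sets borel"
    and sup: "\<And>x. x\<in>{0..1} \<Longrightarrow> measure \<mu> {..x} \<le> x"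
    and D: "D \<in> sets borel" and down: "\<And>x y. x \<in> D \<Longrightarrow> y \<le> x \<Longrightarrow> y \<in> D"
  shows "emeasure \<mu> D \<le> emeasure U01 D"
proof -
  interpret prob_space \<mu> by fact
  have Dm: "D \<in> sets \<mu>" using D mu by simp
  show ?thesis
  proof (cases "{0<..<1} \<subseteq> D")
    case True
    then have "emeasure U01 D = emeasure lborel {0<..<1::real}"
      using D by (simp add: U01_emeasure Int_absorb2)
    also have "\<dots> = 1" by simp
    finally show ?thesis using emeasure_le_1 by simp
  next
    case False
    then obtain z where z: "z \<in> {0<..<1}" "z \<notin> D" by blast
    have lt: "x < z" if "x \<in> D" for x
      using down[OF that, of z] z by (cases "z \<le> x") auto
    show ?thesis
    proof (cases "D = {}")
      case True then show ?thesis by simp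
    next
      case ne: False
      define a where "a = Sup D"
      have bdd: "bdd_above D" using lt by (meson bdd_aboveI less_imp_le)
      have Da: "D \<subseteq> {..max 0 a}" using bdd a_def by (auto intro: cSup_upper le_max_iff_disj[THEN iffD2])
      have az: "a \<le> z" unfolding a_def using ne lt by (intro cSup_least) (auto intro: less_imp_le)
      have sub: "{0<..<a} \<subseteq> D"
      proof
        fix y assume "y \<in> {0<..<a}"
        then have "y < Sup D" by (simp add: a_def)
        then obtain x where "x \<in> D" "y < x" using less_cSup_iff[OF ne bdd] by auto
        then show "y \<in> D" using down by auto
      qed
      have "emeasure \<mu> D \<le> emeasure \<mu> {..max 0 a}"
        using Da mu by (intro emeasure_mono) auto
      also have "\<dots> = ennreal (measure \<mu> {..max 0 a})" by (simp add: emeasure_eq_measure)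
      also have "\<dots> \<le> ennreal (max 0 a)"
        using sup[of "max 0 a"] az z by (intro ennreal_leI) auto
      also have "\<dots> \<le> emeasure U01 D"
      proof (cases "a \<le> 0")
        case True then show ?thesis by simp
      next
        case False
        have "ennreal (max 0 a) = emeasure lborel ({0<..<a} \<inter> {0<..<1::real})"
          using False az z by (simp add: Int_absorb2 max_def)
        also have "\<dots> \<le> emeasure lborel (D \<inter> {0<..<1})"
          using sub D by (intro emeasure_mono) auto
        also have "\<dots> = emeasure U01 D" by (rule U01_emeasure[symmetric, OF D])
        finally show ?thesis .
      qed
      finally show ?thesis .
    qed
  qed
qed

lemma nn_layer:
  fixes \<nu> :: "real measure" and k :: "real \<Rightarrow> real"
  assumes nu: "prob_space \<nu>" "sets \<nu> = sets borel" and km: "k \<in> borel_measurable borel" and k0: "\<And>x. 0 \<le> k x"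
  shows "(\<integral>\<^sup>+x. k x \<partial>\<nu>) = (\<integral>\<^sup>+s. emeasure \<nu> {x. 0 \<le> s \<and> s < k x} \<partial>lborel)"
proof -
  interpret prob_space \<nu> by fact
  interpret pair_sigma_finite \<nu> lborel
    by (simp add: lborel.sigma_finite_measure_axioms pair_sigma_finite.intro sigma_finite_measure_axioms)
  have kn[measurable]: "k \<in> borel_measurable \<nu>" using km by (simp add: measurable_cong_sets[OF nu(2) refl])
  have "(\<integral>\<^sup>+x. k x \<partial>\<nu>) = (\<integral>\<^sup>+x. (\<integral>\<^sup>+s. indicator {0..<k x} s \<partial>lborel) \<partial>\<nu>)"
    using k0 by (intro nn_integral_cong) (simp add: emeasure_lborel_Ico)
  also have "\<dots> = (\<integral>\<^sup>+s. (\<integral>\<^sup>+x. indicator {0..<k x} s \<partial>\<nu>) \<partial>lborel)"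
  proof (rule Fubini'[symmetric])
    have "case_prod (\<lambda>x s. indicator {0..<k x} s :: ennreal) = (\<lambda>p. if 0 \<le> snd p \<and> snd p < k (fst p) then 1 else 0)"
      by (auto simp: fun_eq_iff indicator_def)
    moreover have "(\<lambda>p. if 0 \<le> snd p \<and> snd p < k (fst p) then 1 else 0 :: ennreal) \<in> borel_measurable (\<nu> \<Otimes>\<^sub>M lborel)"
      by measurable
    ultimately show "case_prod (\<lambda>x s. indicator {0..<k x} s :: ennreal) \<in> borel_measurable (\<nu> \<Otimes>\<^sub>M lborel)" by simp
  qed
  also have "\<dots> = (\<integral>\<^sup>+s. emeasure \<nu> {x. 0 \<le> s \<and> s < k x} \<partial>lborel)"
  proof (intro nn_integral_cong)
    fix s :: real
    have st: "{x. 0 \<le> s \<and> s < k x} \<in> sets \<nu>"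
    proof -
      have "{x \<in> space \<nu>. 0 \<le> s \<and> s < k x} \<in> sets \<nu>" by measurable
      then show ?thesis using nu by simp
    qed
    have "(\<integral>\<^sup>+x. indicator {0..<k x} s \<partial>\<nu>) = (\<integral>\<^sup>+x. indicator {x. 0 \<le> s \<and> s < k x} x \<partial>\<nu>)"
      by (intro nn_integral_cong) (auto simp: indicator_def)
    also have "\<dots> = emeasure \<nu> {x. 0 \<le> s \<and> s < k x}" using st by simp
    finally show "(\<integral>\<^sup>+x. indicator {0..<k x} s \<partial>\<nu>) = emeasure \<nu> {x. 0 \<le> s \<and> s < k x}" .
  qed
  finally show ?thesis .
qed

lemma oneD:
  fixes \<mu> :: "real measure" and f :: "real \<Rightarrow> real"
  assumes mu: "prob_space \<mu>" "sets \<mu> = sets borel" and ae: "AE x in \<mu>. x \<in> {0..1}"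
    and sup: "\<And>x. x\<in>{0..1} \<Longrightarrow> measure \<mu> {..x} \<le> x"
    and f: "f \<in> borel_measurable borel" and bnd: "\<And>x. \<bar>f x\<bar> \<le> B"
    and mono: "\<And>x y. x\<in>{0..1} \<Longrightarrow> y\<in>{0..1} \<Longrightarrow> x \<le> y \<Longrightarrow> f y \<le> f x"
  shows "(\<integral>x. f x \<partial>\<mu>) \<le> (\<integral>x. f x \<partial>U01)"
proof -
  interpret prob_space \<mu> by fact
  interpret U: prob_space U01 by (rule U01_prob)
  define c where "c x = max 0 (min 1 x)" for x :: real
  define k where "k x = f (c x) - f 1" for x
  have c01: "c x \<in> {0..1}" for x by (auto simp: c_def)
  have cmono: "c x \<le> c y" if "x \<le> y" for x y using that by (auto simp: c_def)
  have kanti: "k y \<le> k x" if "x \<le> y" for x y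
    using mono[OF c01 c01 cmono[OF that]] by (simp add: k_def)
  have k0: "0 \<le> k x" for x
    using mono[OF c01[of x], of 1] c01[of x] by (simp add: k_def)
  have kb: "k x \<le> 2*B" for x using bnd[of "c x"] bnd[of 1] by (simp add: k_def abs_le_iff)
  have km: "k \<in> borel_measurable borel" unfolding k_def c_def using f by measurable
  have kmu[measurable]: "k \<in> borel_measurable \<mu>" using km by (simp add: measurable_cong_sets[OF mu(2) refl])
  have kU[measurable]: "k \<in> borel_measurable U01" using km by simp
  have fmu[measurable]: "f \<in> borel_measurable \<mu>" using f by (simp add: measurable_cong_sets[OF mu(2) refl])
  have fU[measurable]: "f \<in> borel_measurable U01" using f by simp
  have nn: "(\<integral>\<^sup>+x. k x \<partial>\<mu>) \<le> (\<integral>\<^sup>+x. k x \<partial>U01)"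
  proof -
    have "(\<integral>\<^sup>+x. k x \<partial>\<mu>) = (\<integral>\<^sup>+s. emeasure \<mu> {x. 0 \<le> s \<and> s < k x} \<partial>lborel)"
      by (rule nn_layer[OF mu km k0])
    also have "\<dots> \<le> (\<integral>\<^sup>+s. emeasure U01 {x. 0 \<le> s \<and> s < k x} \<partial>lborel)"
    proof (intro nn_integral_mono downset_le[OF mu sup])
      fix s :: real
      have "{x \<in> space borel. 0 \<le> s \<and> s < k x} \<in> sets borel" using km by measurable
      then show "{x. 0 \<le> s \<and> s < k x} \<in> sets borel" by simp
    next
      fix s x y :: real assume "x \<in> {x. 0 \<le> s \<and> s < k x}" "y \<le> x"
      then show "y \<in> {x. 0 \<le> s \<and> s < k x}" using kanti[of y x] by auto
    qed auto
    also have "\<dots> = (\<integral>\<^sup>+x. k x \<partial>U01)"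
      by (rule nn_layer[OF U01_prob _ km k0, symmetric]) simp
    finally show ?thesis .
  qed
  have ik: "integrable \<nu> k" if "prob_space \<nu>" "k \<in> borel_measurable \<nu>" for \<nu>
  proof -
    interpret N: prob_space \<nu> by fact
    show ?thesis using that k0 kb by (intro N.integrable_const_bound[of k "2*B"]) auto
  qed
  have "(\<integral>x. k x \<partial>\<mu>) = enn2real (\<integral>\<^sup>+x. k x \<partial>\<mu>)"
    using k0 by (intro integral_eq_nn_integral) auto
  also have "\<dots> \<le> enn2real (\<integral>\<^sup>+x. k x \<partial>U01)"
  proof (rule enn2real_mono[OF nn])
    have "(\<integral>\<^sup>+x. k x \<partial>U01) \<le> (\<integral>\<^sup>+x. ennreal (2*B) \<partial>U01)"
      using kb by (intro nn_integral_mono) (simp add: ennreal_leI)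
    also have "\<dots> < top" by (simp add: U.emeasure_space_1)
    finally show "(\<integral>\<^sup>+x. k x \<partial>U01) < top" .
  qed
  also have "\<dots> = (\<integral>x. k x \<partial>U01)"
    using k0 by (intro integral_eq_nn_integral[symmetric]) auto
  finally have kk: "(\<integral>x. k x \<partial>\<mu>) \<le> (\<integral>x. k x \<partial>U01)" .
  have ae1: "AE x in \<mu>. f x = k x + f 1" using ae by eventually_elim (auto simp: k_def c_def)
  have ae2: "AE x in U01. k x + f 1 = f x" using U01_AE by eventually_elim (auto simp: k_def c_def)
  have "(\<integral>x. f x \<partial>\<mu>) = (\<integral>x. k x + f 1 \<partial>\<mu>)"
    by (rule integral_cong_AE[OF fmu _ ae1]) measurable
  also have "\<dots> = (\<integral>x. k x \<partial>\<mu>) + f 1"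
    using ik[OF mu(1) kmu] by (simp add: prob_space_axioms prob_space)
  also have "\<dots> \<le> (\<integral>x. k x \<partial>U01) + f 1" using kk by simp
  also have "\<dots> = (\<integral>x. k x + f 1 \<partial>U01)"
    using ik[OF U01_prob kU] by (simp add: U.prob_space_axioms U.prob_space)
  also have "\<dots> = (\<integral>x. f x \<partial>U01)"
    by (rule integral_cong_AE[OF _ fU ae2]) measurable
  finally show ?thesis .
qed

lemma prob_int_bound:
  fixes f :: "'a \<Rightarrow> real"
  assumes "prob_space \<nu>" "\<And>x. \<bar>f x\<bar> \<le> B"
  shows "\<bar>\<integral>x. f x \<partial>\<nu>\<bar> \<le> B"
proof (cases "integrable \<nu> f")
  case True
  interpret prob_space \<nu> by fact
  have "\<bar>\<integral>x. f x \<partial>\<nu>\<bar> \<le> (\<integral>x. \<bar>f x\<bar> \<partial>\<nu>)"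
    using integral_norm_bound[of \<nu> f] by simp
  also have "\<dots> \<le> (\<integral>x. B \<partial>\<nu>)"
    using True assms(2) by (intro integral_mono) auto
  also have "\<dots> = B" by (simp add: prob_space)
  finally show ?thesis .
next
  case False
  then show ?thesis using assms(2)[of undefined] by (simp add: not_integrable_integral_eq)
qed

lemma core:
  fixes \<mu> :: "nat \<Rightarrow> real measure" and I :: "nat set" and g :: "(nat \<Rightarrow> real) \<Rightarrow> real"
  assumes fin: "finite I"
   and mu: "\<And>i. prob_space (\<mu> i)" "\<And>i. sets (\<mu> i) = sets borel"
   and ae: "\<And>i. AE x in \<mu> i. x \<in> {0..1}"
   and sup: "\<And>i x. x\<in>{0..1} \<Longrightarrow> measure (\<mu> i) {..x} \<le> x"
  shows "g \<in> borel_measurable (PiM I (\<lambda>_. borel)) \<Longrightarrow> (\<And>x. \<bar>g x\<bar> \<le> B) \<Longrightarrow>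
     (\<And>x y. x \<in> I \<rightarrow>\<^sub>E {0..1} \<Longrightarrow> y \<in> I \<rightarrow>\<^sub>E {0..1} \<Longrightarrow> (\<forall>i\<in>I. x i \<le> y i) \<Longrightarrow> g y \<le> g x) \<Longrightarrow>
     (\<integral>x. g x \<partial>PiM I \<mu>) \<le> (\<integral>x. g x \<partial>PiM I (\<lambda>_. U01))"
  using fin
proof (induction I arbitrary: g rule: finite_induct)
  case empty
  then show ?case by (simp add: PiM_empty)
next
  case (insert i I g)
  interpret Pm: product_prob_space \<mu> "insert i I"
    by (simp add: mu(1) product_prob_space.intro product_prob_space_axioms.intro
        product_sigma_finite.intro prob_space_imp_sigma_finite)
  interpret PU: product_prob_space "\<lambda>_. U01" "insert i I"
    by (simp add: U01_prob product_prob_space.intro product_prob_space_axioms.intro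
        product_sigma_finite.intro prob_space_imp_sigma_finite)
  have sm: "sets (PiM J \<mu>) = sets (PiM J (\<lambda>_. borel))" for J
    using mu(2) by (intro sets_PiM_cong) auto
  have su: "sets (PiM J (\<lambda>_. U01)) = sets (PiM J (\<lambda>_. borel))" for J
    by (intro sets_PiM_cong) auto
  have gb[measurable]: "g \<in> borel_measurable (PiM (insert i I) (\<lambda>_. borel))" by fact
  define H where "H x = (\<integral>y. g (x(i:=y)) \<partial>\<mu> i)" for x
  define H' where "H' x = (\<integral>y. g (x(i:=y)) \<partial>U01)" for x
  have addm: "(\<lambda>(x, y). g (x(i:=y))) \<in> borel_measurable (PiM I (\<lambda>_. borel) \<Otimes>\<^sub>M \<nu>)"
    if "sets \<nu> = sets borel" for \<nu> :: "real measure"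
  proof -
    have "(\<lambda>(x, y). x(i:=y)) \<in> measurable (PiM I (\<lambda>_. borel) \<Otimes>\<^sub>M borel) (PiM (insert i I) (\<lambda>_. borel))"
      using measurable_add_dim[of i I "\<lambda>_. borel"] by simp
    then have "(\<lambda>(x, y). x(i:=y)) \<in> measurable (PiM I (\<lambda>_. borel) \<Otimes>\<^sub>M \<nu>) (PiM (insert i I) (\<lambda>_. borel))"
      using that by (simp cong: measurable_cong_sets[OF sets_pair_measure_cong[OF refl that] refl])
    from measurable_compose[OF this gb] show ?thesis by (simp add: case_prod_beta')
  qed
  have Hm: "H \<in> borel_measurable (PiM I (\<lambda>_. borel))"
    unfolding H_def using sigma_finite_measure.borel_measurable_lebesgue_integral[OF prob_space_imp_sigma_finite[OF mu(1)], of "\<lambda>x y. g (x(i:=y))"] addm[OF mu(2)]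
    by (simp add: case_prod_beta')
  have H'm: "H' \<in> borel_measurable (PiM I (\<lambda>_. borel))"
    unfolding H'_def using sigma_finite_measure.borel_measurable_lebesgue_integral[OF prob_space_imp_sigma_finite[OF U01_prob], of "\<lambda>x y. g (x(i:=y))"] addm[of U01]
    by (simp add: case_prod_beta')
  have Hb: "\<bar>H x\<bar> \<le> B" for x unfolding H_def by (rule prob_int_bound[OF mu(1) insert.prems(2)])
  have H'b: "\<bar>H' x\<bar> \<le> B" for x unfolding H'_def by (rule prob_int_bound[OF U01_prob insert.prems(2)])
  have upd: "x(i:=y) \<in> insert i I \<rightarrow>\<^sub>E {0..1}" if "x \<in> I \<rightarrow>\<^sub>E {0..1}" "y \<in> {0..1}" for x y
    using that insert.hyps(2) by (auto simp: PiE_iff extensional_def)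
  have updsp: "x \<in> space (PiM I (\<lambda>_. borel))" if "x \<in> I \<rightarrow>\<^sub>E {0..1}" for x
    using that by (auto simp: space_PiM PiE_iff)
  have slice: "(\<lambda>y. g (x(i:=y))) \<in> borel_measurable borel" if "x \<in> space (PiM I (\<lambda>_. borel))" for x
    using measurable_compose[OF measurable_component_update[OF that insert.hyps(2)] gb] by (simp add: comp_def)
  have slice_int: "integrable \<nu> (\<lambda>y. g (x(i:=y)))" if "prob_space \<nu>" "sets \<nu> = sets borel"
    "x \<in> space (PiM I (\<lambda>_. borel))" for x \<nu>
  proof -
    interpret N: prob_space \<nu> by fact
    show ?thesis using slice[OF that(3)] insert.prems(2)
      by (intro N.integrable_const_bound[where B=B]) (auto simp: measurable_cong_sets[OF that(2) refl])
  qed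
  have Hmono: "H y \<le> H x" if "x \<in> I \<rightarrow>\<^sub>E {0..1}" "y \<in> I \<rightarrow>\<^sub>E {0..1}" "\<forall>j\<in>I. x j \<le> y j" for x y
    unfolding H_def
  proof (rule integral_mono_AE)
    show "integrable (\<mu> i) (\<lambda>z. g (y(i := z)))" using slice_int[OF mu updsp[OF that(2)]] .
    show "integrable (\<mu> i) (\<lambda>z. g (x(i := z)))" using slice_int[OF mu updsp[OF that(1)]] .
    show "AE z in \<mu> i. g (y(i := z)) \<le> g (x(i := z))"
      using ae[of i]
    proof eventually_elim
      case (elim z)
      show ?case by (rule insert.prems(3)[OF upd[OF that(1) elim] upd[OF that(2) elim]]) (use that(3) in auto)
    qed
  qed
  have IH: "(\<integral>x. H x \<partial>PiM I \<mu>) \<le> (\<integral>x. H x \<partial>PiM I (\<lambda>_. U01))"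
    using insert.IH[OF Hm Hb Hmono] .
  have step1: "(\<integral>x. g x \<partial>PiM (insert i I) \<mu>) = (\<integral>x. H x \<partial>PiM I \<mu>)"
    unfolding H_def
    using insert.prems(2) gb
    by (intro Pm.product_integral_insert insert.hyps Pm.integrable_const_bound[where B=B])
       (auto simp: measurable_cong_sets[OF sm refl])
  have step3: "(\<integral>x. g x \<partial>PiM (insert i I) (\<lambda>_. U01)) = (\<integral>x. H' x \<partial>PiM I (\<lambda>_. U01))"
    unfolding H'_def
    using insert.prems(2) gb
    by (intro PU.product_integral_insert insert.hyps PU.integrable_const_bound[where B=B])
       (auto simp: measurable_cong_sets[OF su refl])
  have PIU: "prob_space (PiM I (\<lambda>_. U01))" by (rule prob_space_PiM) (rule U01_prob)
  interpret PIU: prob_space "PiM I (\<lambda>_. U01)" by fact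
  have step2: "(\<integral>x. H x \<partial>PiM I (\<lambda>_. U01)) \<le> (\<integral>x. H' x \<partial>PiM I (\<lambda>_. U01))"
  proof (rule integral_mono_AE)
    show "integrable (PiM I (\<lambda>_. U01)) H" using Hm Hb
      by (intro PIU.integrable_const_bound[where B=B]) (auto simp: measurable_cong_sets[OF su refl])
    show "integrable (PiM I (\<lambda>_. U01)) H'" using H'm H'b
      by (intro PIU.integrable_const_bound[where B=B]) (auto simp: measurable_cong_sets[OF su refl])
    have "AE x in PiM I (\<lambda>_. U01). \<forall>j\<in>I. x j \<in> {0..1}"
    proof (rule AE_finite_allI[OF insert.hyps(1)])
      fix j assume "j \<in> I"
      have "AE x in U01. x \<in> {0..1}" using U01_AE by eventually_elim auto
      then show "AE x in PiM I (\<lambda>_. U01). x j \<in> {0..1}"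
        by (rule AE_PiM_component[of I "\<lambda>_. U01" j "\<lambda>x. x \<in> {0..1}", OF U01_prob \<open>j \<in> I\<close>])
    qed
    then show "AE x in PiM I (\<lambda>_. U01). H x \<le> H' x"
    proof (rule AE_mp[OF _ AE_I2], safe)
      fix x assume x01: "\<forall>j\<in>I. x j \<in> {0..1}" and xs: "x \<in> space (PiM I (\<lambda>_. U01))"
      have xc: "x \<in> I \<rightarrow>\<^sub>E {0..1}" using x01 xs by (auto simp: space_PiM PiE_iff)
      show "H x \<le> H' x"
        unfolding H_def H'_def
      proof (rule oneD[OF mu ae sup slice[OF updsp[OF xc]] insert.prems(2)])
        fix y z :: real assume "y \<in> {0..1}" "z \<in> {0..1}" "y \<le> z"
        then show "g (x(i := z)) \<le> g (x(i := y))"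
          by (intro insert.prems(3)[OF upd[OF xc] upd[OF xc]]) auto
      qed
    qed
  qed
  show ?case using step1 IH step2 step3 by linarith
qed



definition DUF :: "nat \<Rightarrow> nat \<Rightarrow> real measure" where
  "DUF m0 i = (if i < m0 then uniform_measure lborel {0<..<1} else return borel 0)"

lemma DUF_prob: "prob_space (DUF m0 i)"
  by (auto simp: DUF_def U01_prob intro: prob_space_return)

lemma DUF_sets: "sets (DUF m0 i) = sets borel"
  by (simp add: DUF_def)

lemma DU_eq: "DU m m0 = PiM {..<m} (DUF m0)"
  unfolding DU_def DUF_def by simp

lemma sets_DU: "sets (DU m m0) = sets (pspace m)"
  unfolding DU_eq pspace_def by (intro sets_PiM_cong) (auto simp: DUF_sets)

lemma DU_prob: "prob_space (DU m m0)"
  unfolding DU_eq by (rule prob_space_PiM) (rule DUF_prob)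

theorem lemmaC1:
  fixes m m0 :: nat
    and P :: "(nat \<Rightarrow> real) measure"
    and t :: "(nat \<Rightarrow> real) \<Rightarrow> real"
    and \<phi> :: "nat \<Rightarrow> real"
  assumes "m \<ge> 1" and "m0 \<le> m"
    and "prob_space P" and "sets P = sets (pspace m)"
    and "AE p in P. \<forall>i<m. p i \<in> {0..1}"
    and "prob_space.indep_vars P (\<lambda>_. borel) (\<lambda>i p. p i) {..<m0}"
    and "\<And>i x. i < m0 \<Longrightarrow> x \<in> {0..1} \<Longrightarrow> measure P {p \<in> space P. p i \<le> x} \<le> x"
    and "t \<in> borel_measurable (restrict_space (pspace m) ({..<m} \<rightarrow>\<^sub>E {0..1}))"
    and "\<And>p. p \<in> {..<m} \<rightarrow>\<^sub>E {0..1} \<Longrightarrow> t p \<in> {0..1}"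
    and "\<And>p q. p \<in> {..<m} \<rightarrow>\<^sub>E {0..1} \<Longrightarrow> q \<in> {..<m} \<rightarrow>\<^sub>E {0..1} \<Longrightarrow>
               (\<forall>i<m. p i \<le> q i) \<Longrightarrow> t q \<le> t p"
    and "mono \<phi>"
  shows "risk P m0 t \<phi> \<le> risk (DU m m0) m0 t \<phi>"
proof -
  note m0m = assms(2) and Pp = assms(3) and sP = assms(4) and aeP = assms(5) and ind = assms(6)
    and supP = assms(7) and tm = assms(8) and tmono = assms(10) and phim = assms(11)
  interpret P: prob_space P by (rule Pp)
  interpret D: prob_space "DU m m0" by (rule DU_prob)
  define h where "h p = \<phi> (Vrej m0 t p)" for p
  define B where "B = (\<Sum>k\<le>m0. \<bar>\<phi> k\<bar>)"
  have phib: "\<bar>\<phi> k\<bar> \<le> B" if "k \<le> m0" for k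
    unfolding B_def using that by (intro member_le_sum) auto
  have cardle: "card {i. i < m0 \<and> Q i} \<le> m0" for Q
    using card_mono[of "{..<m0}" "{i. i < m0 \<and> Q i}"] by auto
  have hb: "\<bar>h p\<bar> \<le> B" for p unfolding h_def Vrej_def by (rule phib[OF cardle])
  have spP: "space P = space (pspace m)" by (rule sets_eq_imp_space_eq[OF sP])
  have spD: "space (DU m m0) = space (pspace m)" by (rule sets_eq_imp_space_eq[OF sets_DU])
  show ?thesis
  proof (cases "m0 = 0")
    case True
    then have "risk P m0 t \<phi> = \<phi> 0" "risk (DU m m0) m0 t \<phi> = \<phi> 0"
      using P.prob_space D.prob_space by (simp_all add: risk_def Vrej_def True)
    then show ?thesis by simp
  next
    case m0pos: False
    show ?thesis
    proof (cases "h \<in> borel_measurable (pspace m)")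
      case False
      then have "\<not> integrable P h" "\<not> integrable (DU m m0) h"
        by (auto simp: measurable_cong_sets[OF sP refl] measurable_cong_sets[OF sets_DU refl])
      then show ?thesis
        by (simp add: risk_def h_def[symmetric] not_integrable_integral_eq)
    next
      case hm: True
      define I0 where "I0 = {..<m0}"
      define C where "C = {..<m} \<rightarrow>\<^sub>E {0..1::real}"
      define cl where "cl q = (\<lambda>i\<in>{..<m}. if i < m0 then max 0 (min 1 (q i)) else (0::real))" for q :: "nat \<Rightarrow> real"
      define G where "G q = \<phi> (card {i. i < m0 \<and> q i \<le> t (cl q)})" for q
      have Gb: "\<bar>G q\<bar> \<le> B" for q unfolding G_def by (rule phib[OF cardle])
      have clC: "cl q \<in> C" for q unfolding cl_def C_def by auto
      have clm: "cl \<in> measurable (PiM I0 (\<lambda>_. borel)) (restrict_space (pspace m) C)"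
      proof (rule measurable_restrict_space2)
        show "cl \<in> space (PiM I0 (\<lambda>_. borel)) \<rightarrow> C" using clC by auto
        show "cl \<in> measurable (PiM I0 (\<lambda>_. borel)) (pspace m)"
          unfolding cl_def pspace_def
        proof (rule measurable_restrict)
          fix i assume "i \<in> {..<m}"
          show "(\<lambda>q::nat\<Rightarrow>real. if i < m0 then max 0 (min 1 (q i)) else 0) \<in> borel_measurable (PiM I0 (\<lambda>_. borel))"
          proof (cases "i < m0")
            case True
            then have ci: "(\<lambda>q::nat\<Rightarrow>real. q i) \<in> borel_measurable (PiM I0 (\<lambda>_. borel))"
              unfolding I0_def by (intro measurable_component_singleton) auto
            have cc: "(\<lambda>x::real. max 0 (min 1 x)) \<in> borel_measurable borel"
              by (intro borel_measurable_continuous_onI continuous_intros)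
            have "(\<lambda>q::nat\<Rightarrow>real. max 0 (min 1 (q i))) \<in> borel_measurable (PiM I0 (\<lambda>_. borel))"
              using measurable_compose[OF ci cc] .
            with True show ?thesis by simp
          qed simp
        qed
      qed
      have Tm[measurable]: "(\<lambda>q. t (cl q)) \<in> borel_measurable (PiM I0 (\<lambda>_. borel))"
        using measurable_compose[OF clm tm[folded C_def]] by (simp add: comp_def)
      have Gm: "G \<in> borel_measurable (PiM I0 (\<lambda>_. borel))"
      proof -
        have cm: "(\<lambda>q. card {i. i < m0 \<and> q i \<le> t (cl q)}) \<in> measurable (PiM I0 (\<lambda>_. borel)) (count_space UNIV)"
        proof (rule measurable_card)
          fix j
          show "{x \<in> space (PiM I0 (\<lambda>_. borel)). j \<in> {i. i < m0 \<and> x i \<le> t (cl x)}} \<in> sets (PiM I0 (\<lambda>_. borel))"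
          proof (cases "j < m0")
            case True
            then have [measurable]: "(\<lambda>q::nat\<Rightarrow>real. q j) \<in> borel_measurable (PiM I0 (\<lambda>_. borel))"
              unfolding I0_def by (intro measurable_component_singleton) auto
            show ?thesis using True by simp measurable
          qed simp
        qed
        show ?thesis unfolding G_def
          by (rule measurable_compose[OF cm]) simp
      qed
      define r where "r p = (\<lambda>i\<in>I0. p i)" for p :: "nat \<Rightarrow> real"
      have compP: "(\<lambda>p. p i) \<in> borel_measurable P" if "i < m" for i
        unfolding measurable_cong_sets[OF sP refl] pspace_def
        using that by (intro measurable_component_singleton) auto
      have rP: "r \<in> measurable P (PiM I0 (\<lambda>_. borel))"
        unfolding r_def using compP m0m by (intro measurable_restrict) (auto simp: I0_def)
      have aeC: "AE p in P. p \<in> C"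
        using AE_space[of P] aeP
      proof eventually_elim
        case (elim p)
        then show ?case using spP by (auto simp: C_def pspace_def space_PiM PiE_iff)
      qed
      have rI0: "r p i = p i" if "i < m0" for p i using that by (simp add: r_def I0_def)
      have clr: "cl (r p) = (\<lambda>i\<in>{..<m}. if i < m0 then p i else 0)" if "p \<in> C" for p
        using that by (auto simp: cl_def rI0 C_def PiE_iff fun_eq_iff)
      have hG: "h p \<le> G (r p)" if pC: "p \<in> C" for p
      proof -
        have qC: "cl (r p) \<in> C" by (rule clC)
        have "\<forall>i<m. cl (r p) i \<le> p i" using pC by (auto simp: clr C_def PiE_iff)
        then have tt: "t p \<le> t (cl (r p))" using tmono[OF qC[unfolded C_def] pC[unfolded C_def]] by blast
        have "card {i. i < m0 \<and> p i \<le> t p} \<le> card {i. i < m0 \<and> r p i \<le> t (cl (r p))}"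
          using tt by (intro card_mono) (auto simp: rI0)
        then show ?thesis unfolding h_def G_def Vrej_def using phim by (simp add: monoD)
      qed
      have GrP: "(\<lambda>p. G (r p)) \<in> borel_measurable P" using measurable_compose[OF rP Gm] .
      have hP: "h \<in> borel_measurable P" using hm by (simp add: measurable_cong_sets[OF sP refl])
      have step1: "(\<integral>p. h p \<partial>P) \<le> (\<integral>p. G (r p) \<partial>P)"
      proof (rule integral_mono_AE)
        show "integrable P h" using hP hb by (intro P.integrable_const_bound[where B=B]) auto
        show "integrable P (\<lambda>p. G (r p))" using GrP Gb by (intro P.integrable_const_bound[where B=B]) auto
        show "AE p in P. h p \<le> G (r p)" using aeC by eventually_elim (rule hG)
      qed
      define \<mu> where "\<mu> i = (if i < m0 then distr P borel (\<lambda>p. p i) else U01)" for i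
      have I0ne: "I0 \<noteq> {}" using m0pos by (auto simp: I0_def)
      have distrP: "distr P (PiM I0 (\<lambda>_. borel)) r = PiM I0 (\<lambda>i. distr P borel (\<lambda>p. p i))"
        unfolding r_def
        using P.indep_vars_iff_distr_eq_PiM'[where I=I0 and M'="\<lambda>_. borel" and X="\<lambda>i p. p i", OF I0ne] ind compP m0m
        by (auto simp: I0_def)
      also have "\<dots> = PiM I0 \<mu>" by (intro PiM_cong) (auto simp: \<mu>_def I0_def)
      finally have distrP': "distr P (PiM I0 (\<lambda>_. borel)) r = PiM I0 \<mu>" .
      have step2: "(\<integral>p. G (r p) \<partial>P) = (\<integral>q. G q \<partial>PiM I0 \<mu>)"
        by (simp add: distrP'[symmetric] integral_distr[OF rP Gm])
      have mu_prob: "prob_space (\<mu> i)" for i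
        using m0m by (auto simp: \<mu>_def U01_prob intro!: P.prob_space_distr compP)
      have mu_sets: "sets (\<mu> i) = sets borel" for i by (simp add: \<mu>_def)
      have mu_ae: "AE x in \<mu> i. x \<in> {0..1}" for i
      proof (cases "i < m0")
        case True
        have "AE p in P. p i \<in> {0..1}" using aeP by eventually_elim (use True m0m in auto)
        moreover have mueq: "\<mu> i = distr P borel (\<lambda>p. p i)" using True by (simp add: \<mu>_def)
        moreover have "(AE x in distr P borel (\<lambda>p. p i). x \<in> {0..1}) \<longleftrightarrow> (AE p in P. p i \<in> {0..1})"
          using True m0m by (intro AE_distr_iff compP) auto
        ultimately show ?thesis apply (subst mueq) by blast
      next
        case False
        have "AE x in U01. x \<in> {0..1}" using U01_AE by eventually_elim auto
        moreover have mueq: "\<mu> i = U01" using False by (simp add: \<mu>_def)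
        ultimately show ?thesis by (subst mueq)
      qed
      have mu_sup: "measure (\<mu> i) {..x} \<le> x" if "x \<in> {0..1}" for i x
      proof (cases "i < m0")
        case True
        have "measure (\<mu> i) {..x} = measure P ((\<lambda>p. p i) -` {..x} \<inter> space P)"
          using True m0m by (simp add: \<mu>_def measure_distr[OF compP])
        also have "(\<lambda>p. p i) -` {..x} \<inter> space P = {p \<in> space P. p i \<le> x}" by auto
        finally show ?thesis using supP[OF True that] by simp
      next
        case False
        have "measure U01 {..x} = measure lborel ({0<..<1} \<inter> {..x})"
          by (simp add: measure_uniform_measure)
        also have "\<dots> \<le> measure lborel {0<..x}"
          using that by (intro measure_mono_fmeasurable) (auto simp: fmeasurable_def)
        also have "\<dots> = x" using that by simp
        finally show ?thesis using False by (simp add: \<mu>_def)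
      qed
      have Gmono: "G y \<le> G x" if "x \<in> I0 \<rightarrow>\<^sub>E {0..1}" "y \<in> I0 \<rightarrow>\<^sub>E {0..1}" "\<forall>i\<in>I0. x i \<le> y i" for x y
      proof -
        have xy: "\<forall>i<m. cl x i \<le> cl y i"
        proof (intro allI impI)
          fix i assume im: "i < m"
          show "cl x i \<le> cl y i"
          proof (cases "i < m0")
            case True
            then have "x i \<le> y i" using that(3) by (auto simp: I0_def)
            then show ?thesis using im True by (simp add: cl_def)
          qed (use im in \<open>simp add: cl_def\<close>)
        qed
        have tt: "t (cl y) \<le> t (cl x)" using tmono[OF clC[unfolded C_def] clC[unfolded C_def] xy] .
        have "card {i. i < m0 \<and> y i \<le> t (cl y)} \<le> card {i. i < m0 \<and> x i \<le> t (cl x)}"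
          using tt that(3) by (intro card_mono) (force simp: I0_def)+
        then show ?thesis unfolding G_def using phim by (simp add: monoD)
      qed
      have step3: "(\<integral>q. G q \<partial>PiM I0 \<mu>) \<le> (\<integral>q. G q \<partial>PiM I0 (\<lambda>_. U01))"
        by (rule core[OF _ mu_prob mu_sets mu_ae mu_sup Gm Gb Gmono]) (simp add: I0_def)
      interpret DF: product_prob_space "DUF m0" "{..<m}"
        by (simp add: DUF_prob product_prob_space.intro product_prob_space_axioms.intro
            product_sigma_finite.intro prob_space_imp_sigma_finite)
      have PU: "PiM I0 (\<lambda>_. U01) = PiM I0 (DUF m0)" by (intro PiM_cong) (auto simp: DUF_def I0_def)
      have rD: "r \<in> measurable (DU m m0) (PiM I0 (DUF m0))"
        unfolding r_def DU_eq using m0m by (intro measurable_restrict_subset) (auto simp: I0_def)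
      have GD: "G \<in> borel_measurable (PiM I0 (DUF m0))"
        using Gm by (simp add: measurable_cong_sets[OF sets_PiM_cong[OF refl DUF_sets] refl])
      have step4: "(\<integral>q. G q \<partial>PiM I0 (\<lambda>_. U01)) = (\<integral>p. G (r p) \<partial>DU m m0)"
      proof -
        have "PiM I0 (DUF m0) = distr (PiM {..<m} (DUF m0)) (PiM I0 (DUF m0)) (\<lambda>f. restrict f I0)"
          using m0m by (intro DF.distr_restrict) (auto simp: I0_def)
        then have "PiM I0 (\<lambda>_. U01) = distr (DU m m0) (PiM I0 (DUF m0)) r"
          by (simp add: PU DU_eq r_def[abs_def])
        then show ?thesis by (simp add: integral_distr[OF rD GD])
      qed
      have aeD: "AE p in DU m m0. \<forall>i<m. p i \<in> (if i < m0 then {0<..<1} else {0})"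
      proof -
        have "AE p in PiM {..<m} (DUF m0). \<forall>i\<in>{..<m}. p i \<in> (if i < m0 then {0<..<1} else {0})"
        proof (rule AE_finite_allI, simp)
          fix i assume i: "i \<in> {..<m}"
          have "AE x in DUF m0 i. x \<in> (if i < m0 then {0<..<1} else {0})"
          proof (cases "i < m0")
            case True then show ?thesis using U01_AE by (subst DUF_def) simp
          next
            case False then show ?thesis by (subst DUF_def) (simp add: AE_return)
          qed
          then show "AE p in PiM {..<m} (DUF m0). p i \<in> (if i < m0 then {0<..<1} else {0})"
            by (rule AE_PiM_component[OF DUF_prob i])
        qed
        then show ?thesis by (subst DU_eq) (erule AE_mp, intro AE_I2, auto)
      qed
      have step5: "(\<integral>p. G (r p) \<partial>DU m m0) = (\<integral>p. h p \<partial>DU m m0)"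
      proof (rule integral_cong_AE)
        show "(\<lambda>p. G (r p)) \<in> borel_measurable (DU m m0)" using measurable_compose[OF rD GD] .
        show "h \<in> borel_measurable (DU m m0)" using hm by (simp add: measurable_cong_sets[OF sets_DU refl])
        show "AE p in DU m m0. G (r p) = h p"
          using AE_space[of "DU m m0"] aeD
        proof eventually_elim
          case (elim p)
          have pC: "p \<in> C" using elim spD
            by (auto simp: C_def pspace_def space_PiM PiE_iff split: if_splits)
          have "cl (r p) = p"
            using elim spD unfolding clr[OF pC]
            by (auto simp: fun_eq_iff pspace_def space_PiM PiE_iff extensional_def split: if_splits)
          then show ?case by (simp add: G_def h_def Vrej_def rI0 cong: conj_cong)
        qed
      qed
      show ?thesis unfolding risk_def h_def[symmetric]
        using step1 step2 step3 step4 step5 by linarith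
    qed
  qed
qed

end
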